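(* Let $S$ be a submonoid of $\mathbb N^d$ and $\mathbf b\in S\setminus\{0\}$. Then $\mathrm{PF}(S)\neq\varnothing$ if and only if $\mathrm{maximals}_{\preceq_S}\mathrm{Ap}(S,\mathbf b)\neq\varnothing$. In this case $\mathrm{PF}(S)=\{\mathbf a-\mathbf b:\mathbf a\in\mathrm{maximals}_{\preceq_S}\mathrm{Ap}(S,\mathbf b)\}$.
   Context: $\mathrm{pos}(S)$ is the set of finite nonnegative rational linear combinations of elements of $S$; $\mathcal H(S)=(\mathrm{pos}(S)\setminus S)\cap\mathbb N^d$; $\mathrm{PF}(S)=\{\mathbf a\in\mathcal H(S):\mathbf a+(S\setminus\{0\})\subseteq S\}$. For $\mathbf b\in S\setminus\{0\}$, $\mathrm{Ap}(S,\mathbf b)=\{\mathbf a\in S:\mathbf a-\mathbf b\in\mathrm{pos}(S)\setminus S\}$. The partial order $\preceq_S$ on $\mathbb N^d$ is given by $\mathbf x\preceq_S\mathbf y$ iff $\mathbf y-\mathbf x\in S$, and $\mathrm{maximals}_{\preceq_S}X$ is the set of maximal elements of $X$ for this order. *)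

theory Defs
  imports Complex_Main "HOL-Library.Function_Algebras"
begin

text \<open>Elements of N^d are functions 'd \<Rightarrow> nat for a finite index type 'd
  (d = CARD('d)); Q^d is 'd \<Rightarrow> rat. Addition/subtraction are pointwise.\<close>

definition emb :: "('d \<Rightarrow> nat) \<Rightarrow> ('d \<Rightarrow> rat)" where
  "emb a = (\<lambda>i. of_nat (a i))"

definition submonoid :: "('d \<Rightarrow> nat) set \<Rightarrow> bool" where
  "submonoid S \<longleftrightarrow> 0 \<in> S \<and> (\<forall>x\<in>S. \<forall>y\<in>S. x + y \<in> S)"

definition pos :: "('d \<Rightarrow> nat) set \<Rightarrow> ('d \<Rightarrow> rat) set" where
  "pos S = {v. \<exists>F c. finite F \<and> F \<subseteq> S \<and> (\<forall>s\<in>F. c s \<ge> (0::rat)) \<and>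
                   v = (\<lambda>i. \<Sum>s\<in>F. c s * of_nat (s i))}"

definition holes :: "('d \<Rightarrow> nat) set \<Rightarrow> ('d \<Rightarrow> nat) set" where
  "holes S = {a. emb a \<in> pos S \<and> a \<notin> S}"

definition PF :: "('d \<Rightarrow> nat) set \<Rightarrow> ('d \<Rightarrow> nat) set" where
  "PF S = {a \<in> holes S. \<forall>s \<in> S - {0}. a + s \<in> S}"

definition Ap :: "('d \<Rightarrow> nat) set \<Rightarrow> ('d \<Rightarrow> nat) \<Rightarrow> ('d \<Rightarrow> nat) set" where
  "Ap S b = {a \<in> S. emb a - emb b \<in> pos S - emb ` S}"

definition preceq_S :: "('d \<Rightarrow> nat) set \<Rightarrow> ('d \<Rightarrow> nat) \<Rightarrow> ('d \<Rightarrow> nat) \<Rightarrow> bool" where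
  "preceq_S S x y \<longleftrightarrow> (\<exists>s\<in>S. y = x + s)"

definition maximals :: "('d \<Rightarrow> nat) set \<Rightarrow> ('d \<Rightarrow> nat) set \<Rightarrow> ('d \<Rightarrow> nat) set" where
  "maximals S X = {x \<in> X. \<forall>y \<in> X. preceq_S S x y \<longrightarrow> y = x}"

end

theory Submission
  imports Defs
begin

lemma emb_add: "emb (x + y) = emb x + emb y"
  by (auto simp: emb_def fun_eq_iff)

lemma emb_inj: "emb x = emb y \<Longrightarrow> x = y"
  by (auto simp: emb_def fun_eq_iff)

lemma emb_in_pos: "x \<in> S \<Longrightarrow> emb x \<in> pos S"
  unfolding pos_def emb_def
  by (rule CollectI, rule exI[of _ "{x}"], rule exI[of _ "\<lambda>_. 1"]) auto

lemma pos_nonneg: "v \<in> pos S \<Longrightarrow> v i \<ge> 0"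
  unfolding pos_def by (auto intro!: sum_nonneg)

lemma pos_add:
  assumes "u \<in> pos S" "v \<in> pos S" shows "u + v \<in> pos S"
proof -
  obtain F c where F: "finite F" "F \<subseteq> S" "\<forall>s\<in>F. c s \<ge> (0::rat)"
    "u = (\<lambda>i. \<Sum>s\<in>F. c s * of_nat (s i))" using assms(1) unfolding pos_def by blast
  obtain G d where G: "finite G" "G \<subseteq> S" "\<forall>s\<in>G. d s \<ge> (0::rat)"
    "v = (\<lambda>i. \<Sum>s\<in>G. d s * of_nat (s i))" using assms(2) unfolding pos_def by blast
  define e where "e s = (if s \<in> F then c s else 0) + (if s \<in> G then d s else 0)" for s
  have "u + v = (\<lambda>i. \<Sum>s\<in>F \<union> G. e s * of_nat (s i))"
  proof
    fix i
    have 1: "(\<Sum>s\<in>F. c s * of_nat (s i)) = (\<Sum>s\<in>F \<union> G. (if s \<in> F then c s else 0) * of_nat (s i))"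
      by (rule sum.mono_neutral_cong_left) (use F G in auto)
    have 2: "(\<Sum>s\<in>G. d s * of_nat (s i)) = (\<Sum>s\<in>F \<union> G. (if s \<in> G then d s else 0) * of_nat (s i))"
      by (rule sum.mono_neutral_cong_left) (use F G in auto)
    show "(u + v) i = (\<Sum>s\<in>F \<union> G. e s * of_nat (s i))"
      using 1 2 F(4) G(4) by (simp add: e_def distrib_right sum.distrib)
  qed
  moreover have "\<forall>s\<in>F \<union> G. e s \<ge> 0" using F G by (auto simp: e_def)
  ultimately show ?thesis using F(1,2) G(1,2) unfolding pos_def
    by (intro CollectI exI[of _ "F \<union> G"] exI[of _ e]) simp
qed

lemma Ap_iff: "a \<in> Ap S b \<longleftrightarrow> a \<in> S \<and> (\<forall>i. b i \<le> a i) \<and> a - b \<in> holes S"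
proof
  assume A: "a \<in> Ap S b"
  then have p: "emb a - emb b \<in> pos S" and n: "emb a - emb b \<notin> emb ` S" and aS: "a \<in> S"
    by (auto simp: Ap_def)
  have le: "\<forall>i. b i \<le> a i"
    using pos_nonneg[OF p] by (auto simp: emb_def)
  then have e: "emb a - emb b = emb (a - b)" by (auto simp: emb_def fun_eq_iff of_nat_diff)
  show "a \<in> S \<and> (\<forall>i. b i \<le> a i) \<and> a - b \<in> holes S"
    using aS le p n unfolding e holes_def by auto
next
  assume "a \<in> S \<and> (\<forall>i. b i \<le> a i) \<and> a - b \<in> holes S"
  then have aS: "a \<in> S" and le: "\<forall>i. b i \<le> a i" and h: "a - b \<in> holes S" by auto
  from le have e: "emb a - emb b = emb (a - b)" by (auto simp: emb_def fun_eq_iff of_nat_diff)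
  have "emb a - emb b \<in> pos S - emb ` S" unfolding e using h by (auto simp: holes_def dest: emb_inj)
  then show "a \<in> Ap S b" using aS by (simp add: Ap_def)
qed

theorem proposition3p7:
  fixes S :: "('d::finite \<Rightarrow> nat) set" and b :: "'d \<Rightarrow> nat"
  assumes "submonoid S" and "b \<in> S" and "b \<noteq> 0"
  shows "(PF S \<noteq> {} \<longleftrightarrow> maximals S (Ap S b) \<noteq> {}) \<and>
         (PF S \<noteq> {} \<longrightarrow> PF S = (\<lambda>a. a - b) ` maximals S (Ap S b))"
proof -
  have add: "x \<in> S \<Longrightarrow> y \<in> S \<Longrightarrow> x + y \<in> S" for x y
    using assms(1) by (auto simp: submonoid_def)
  have eq: "PF S = (\<lambda>a. a - b) ` maximals S (Ap S b)"
  proof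
    show "PF S \<subseteq> (\<lambda>a. a - b) ` maximals S (Ap S b)"
    proof
      fix h assume hP: "h \<in> PF S"
      then have hH: "h \<in> holes S" and hs: "\<forall>s\<in>S - {0}. h + s \<in> S" by (auto simp: PF_def)
      have hb: "(h + b) - b = h" by (auto simp: fun_eq_iff)
      have aAp: "h + b \<in> Ap S b"
        unfolding Ap_iff hb using hH hs assms(2,3) by auto
      have "h + b \<in> maximals S (Ap S b)"
        unfolding maximals_def preceq_S_def
      proof (intro CollectI conjI ballI impI aAp)
        fix y assume y: "y \<in> Ap S b" and "\<exists>s\<in>S. y = h + b + s"
        then obtain s where s: "s \<in> S" "y = h + b + s" by blast
        show "y = h + b"
        proof (rule ccontr)
          assume "y \<noteq> h + b"
          then have "s \<noteq> 0" using s by auto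
          then have "h + s \<in> S" using hs s by auto
          moreover have "y - b = h + s" using s by (auto simp: fun_eq_iff)
          ultimately show False using y by (auto simp: Ap_iff holes_def)
        qed
      qed
      then show "h \<in> (\<lambda>a. a - b) ` maximals S (Ap S b)" using hb by force
    qed
  next
    show "(\<lambda>a. a - b) ` maximals S (Ap S b) \<subseteq> PF S"
    proof
      fix h assume "h \<in> (\<lambda>a. a - b) ` maximals S (Ap S b)"
      then obtain a where aM: "a \<in> maximals S (Ap S b)" and h: "h = a - b" by blast
      have aAp: "a \<in> Ap S b" and mx: "\<And>y. y \<in> Ap S b \<Longrightarrow> \<exists>s\<in>S. y = a + s \<Longrightarrow> y = a"
        using aM by (auto simp: maximals_def preceq_S_def)
      from aAp have aS: "a \<in> S" and le: "\<forall>i. b i \<le> a i" and hH: "h \<in> holes S"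
        by (auto simp: Ap_iff h)
      have "h + s \<in> S" if sS: "s \<in> S" "s \<noteq> 0" for s
      proof (rule ccontr)
        assume nS: "h + s \<notin> S"
        have "emb (h + s) \<in> pos S" unfolding emb_add
          using pos_add[OF _ emb_in_pos[OF sS(1)]] hH by (auto simp: holes_def)
        then have hole: "h + s \<in> holes S" using nS by (auto simp: holes_def)
        have e: "(a + s) - b = h + s" using le h by (auto simp: fun_eq_iff)
        have "a + s \<in> Ap S b" unfolding Ap_iff e using hole add[OF aS sS(1)] le
          by (auto simp: add_increasing2)
        then have "a + s = a" using mx sS by blast
        then have "s = 0" by (auto simp: fun_eq_iff)
        then show False using sS by simp
      qed
      then show "h \<in> PF S" using hH by (auto simp: PF_def)
    qed
  qed
  then show ?thesis by simp
qed

end
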